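(* Let $K$ be a number field, $\gamma\in\mathcal O_K$ a primitive element with monic minimal polynomial $f\in\mathbb Z[x]$, and let $I = a\mathcal O_K + \alpha\mathcal O_K$ with $a$ a positive integer and $\alpha\in\mathcal O_K$. Assume $\gcd(a, [\mathcal O_K:\mathbb Z[\gamma]]) = 1$. Let $g\in\mathbb Q[x]$ satisfy $g(\gamma) = \alpha$ and have coefficients whose denominators are coprime to $a$, and let $\bar g,\bar f$ be the images in $(\mathbb Z/a\mathbb Z)[x]$. Then $\min(I)$ is the unique positive divisor $m$ of $a$ such that $\mathrm{Rres}_{\mathbb Z/a\mathbb Z}(\bar g, \bar f)$ is the ideal generated by $m \bmod a$ in $\mathbb Z/a\mathbb Z$.
   Context: $\mathcal O_K$ is the ring of integers of $K$. The minimum $\min(I)$ is the positive integer with $I\cap\mathbb Z = \min(I)\mathbb Z$. For a commutative ring $S$ and $p,q \in S[x]$, $\mathrm{Rres}_S(p,q) = (p,q)\cap S$, where $(p,q)$ is the ideal of $S[x]$ generated by $p,q$. *)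

theory Defs
  imports "HOL-Computational_Algebra.Computational_Algebra" "HOL-Number_Theory.Cong"
begin

text \<open>Everything lives inside the complex numbers: the number field is K = Q(gamma)
  for an algebraic integer gamma.\<close>

definition algebraic_integer :: "complex \<Rightarrow> bool" where
  "algebraic_integer x \<longleftrightarrow> (\<exists>p :: int poly. lead_coeff p = 1 \<and> poly (map_poly of_int p) x = 0)"

text \<open>K = Q(gamma) (gamma algebraic, so Q[gamma] = Q(gamma)).\<close>
definition num_field :: "complex \<Rightarrow> complex set" where
  "num_field \<gamma> = {poly (map_poly of_rat p) \<gamma> | p :: rat poly. True}"

definition ring_of_integers :: "complex \<Rightarrow> complex set" where
  "ring_of_integers \<gamma> = {x \<in> num_field \<gamma>. algebraic_integer x}"

definition int_order :: "complex \<Rightarrow> complex set" where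
  "int_order \<gamma> = {poly (map_poly of_int p) \<gamma> | p :: int poly. True}"

definition order_index :: "complex \<Rightarrow> nat" where
  "order_index \<gamma> = card ((\<lambda>x. {x + y | y. y \<in> int_order \<gamma>}) ` ring_of_integers \<gamma>)"

definition two_gen_ideal :: "complex \<Rightarrow> int \<Rightarrow> complex \<Rightarrow> complex set" where
  "two_gen_ideal \<gamma> a \<alpha> =
     {of_int a * x + \<alpha> * y | x y. x \<in> ring_of_integers \<gamma> \<and> y \<in> ring_of_integers \<gamma>}"

definition ideal_min :: "complex set \<Rightarrow> int" where
  "ideal_min I = (THE m. m > 0 \<and> {n :: int. of_int n \<in> I} = {k * m | k. True})"

text \<open>G is an integer lift of the reduction of g modulo a: for g_i = r/s (lowest terms,
  s coprime to a), G_i * s = r (mod a), i.e. G_i reduces to r * s^{-1} in Z/aZ.\<close>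
definition reduction_lift :: "int \<Rightarrow> rat poly \<Rightarrow> int poly \<Rightarrow> bool" where
  "reduction_lift a g G \<longleftrightarrow>
     (\<forall>i. [coeff G i * snd (quotient_of (coeff g i)) = fst (quotient_of (coeff g i))] (mod a))"

text \<open>Integers c whose class mod a lies in Rres_{Z/aZ}(gbar, fbar) = (gbar, fbar) \<inter> Z/aZ,
  with polynomials over Z/aZ represented by integer polynomials up to coefficientwise
  congruence mod a.\<close>
definition rres_mod :: "int \<Rightarrow> rat poly \<Rightarrow> int poly \<Rightarrow> int set" where
  "rres_mod a g f = {c. \<exists>G u v. reduction_lift a g G \<and>
      (\<forall>i. [coeff (u * G + v * f) i = coeff [:c:] i] (mod a))}"

definition gen_ideal_mod :: "int \<Rightarrow> int \<Rightarrow> int set" where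
  "gen_ideal_mod a m = {c. \<exists>k. [c = k * m] (mod a)}"

end

theory Submission
  imports Defs "Jordan_Normal_Form.Char_Poly" "HOL-Computational_Algebra.Field_as_Ring"
begin


lemma alg_int_eig:
  fixes M :: "int mat" and v :: "complex vec"
  assumes M: "M \<in> carrier_mat N N" and v: "v \<in> carrier_vec N" "v \<noteq> 0\<^sub>v N"
    and ev: "map_mat of_int M *\<^sub>v v = x \<cdot>\<^sub>v v"
  shows "algebraic_integer x"
proof -
  have "degree (char_poly M) = N \<and> coeff (char_poly M) N = 1" by (rule degree_monic_char_poly[OF M])
  hence lc: "lead_coeff (char_poly M) = 1" by simp
  have cp: "char_poly (map_mat of_int M) = map_poly of_int (char_poly M)"
    by (rule of_int_hom.char_poly_hom[OF M])
  have M': "map_mat (of_int :: int \<Rightarrow> complex) M \<in> carrier_mat N N" using M by simp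
  have "eigenvalue (map_mat of_int M) x" unfolding eigenvalue_def eigenvector_def using M v ev by auto
  hence "poly (char_poly (map_mat of_int M)) x = 0" using eigenvalue_root_char_poly[OF M'] by auto
  thus ?thesis unfolding algebraic_integer_def using lc cp by metis
qed

lemma alg_int_span:
  fixes W :: "'i \<Rightarrow> complex"
  assumes fin: "finite I" and w0: "w0 \<in> I" "W w0 \<noteq> 0"
    and cl: "\<And>i. i \<in> I \<Longrightarrow> \<exists>c :: 'i \<Rightarrow> int. z * W i = (\<Sum>j\<in>I. of_int (c j) * W j)"
  shows "algebraic_integer z"
proof -
  obtain h where h: "bij_betw h {0..<card I} I" using ex_bij_betw_nat_finite[OF fin] by blast
  define N where "N = card I"
  from cl obtain C where C: "\<And>i. i \<in> I \<Longrightarrow> z * W i = (\<Sum>j\<in>I. of_int (C i j) * W j)" by metis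
  define M :: "int mat" where "M = mat N N (\<lambda>(k,l). C (h k) (h l))"
  define v :: "complex vec" where "v = vec N (\<lambda>k. W (h k))"
  have hI: "\<And>k. k < N \<Longrightarrow> h k \<in> I" using h unfolding N_def bij_betw_def by auto
  obtain k0 where k0: "k0 < N" "h k0 = w0" using h w0 unfolding N_def bij_betw_def by force
  have M: "M \<in> carrier_mat N N" unfolding M_def by simp
  have vc: "v \<in> carrier_vec N" unfolding v_def by simp
  have vnz: "v \<noteq> 0\<^sub>v N"
  proof
    assume "v = 0\<^sub>v N"
    hence "v $ k0 = 0" using k0 by simp
    thus False using k0 w0 unfolding v_def by simp
  qed
  have "map_mat of_int M *\<^sub>v v = z \<cdot>\<^sub>v v"
  proof (rule eq_vecI)
    fix k assume "k < dim_vec (z \<cdot>\<^sub>v v)"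
    hence k: "k < N" unfolding v_def by simp
    have "(map_mat of_int M *\<^sub>v v) $ k = (\<Sum>l\<in>{0..<N}. of_int (C (h k) (h l)) * W (h l))"
      using k unfolding M_def v_def by (simp add: scalar_prod_def)
    also have "\<dots> = (\<Sum>j\<in>I. of_int (C (h k) j) * W j)"
      using sum.reindex_bij_betw[OF h, of "\<lambda>j. of_int (C (h k) j) * W j"] unfolding N_def by simp
    also have "\<dots> = z * W (h k)" using C[OF hI[OF k]] by simp
    also have "\<dots> = (z \<cdot>\<^sub>v v) $ k" using k unfolding v_def by simp
    finally show "(map_mat of_int M *\<^sub>v v) $ k = (z \<cdot>\<^sub>v v) $ k" .
  qed (simp add: M_def v_def)
  thus ?thesis using alg_int_eig[OF M vc vnz] by blast
qed



lemma monic_rel: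
  fixes x :: complex
  assumes "lead_coeff p = 1" "poly (of_int_poly p) x = 0"
  shows "x ^ degree p = - (\<Sum>l<degree p. of_int (coeff p l) * x ^ l)"
proof -
  have "poly (of_int_poly p) x = (\<Sum>i\<le>degree p. of_int (coeff p i) * x ^ i)"
    by (simp add: poly_altdef of_int_hom.degree_map_poly_hom)
  also have "\<dots> = (\<Sum>i<degree p. of_int (coeff p i) * x ^ i) + x ^ degree p"
    using assms(1) by (simp add: lessThan_Suc_atMost[symmetric])
  finally show ?thesis using assms(2) by (simp add: eq_neg_iff_add_eq_0 add.commute)
qed

lemma monic_deg_pos:
  fixes x :: complex
  assumes "lead_coeff p = 1" "poly (of_int_poly p) x = 0"
  shows "degree p > 0"
proof (rule ccontr)
  assume "\<not> degree p > 0"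
  hence "degree p = 0" by simp
  hence "p = [:coeff p 0:]" by (rule degree_0_id[symmetric])
  moreover have "coeff p 0 = 1" using assms(1) \<open>degree p = 0\<close> by simp
  ultimately have "p = [:1:]" by simp
  thus False using assms(2) by simp
qed

lemma alg_int_add_mult:
  assumes "algebraic_integer x" "algebraic_integer y"
  shows "algebraic_integer (x + y) \<and> algebraic_integer (x * y)"
proof -
  obtain p where p: "lead_coeff p = 1" "poly (of_int_poly p) x = 0" using assms(1) unfolding algebraic_integer_def by blast
  obtain q where q: "lead_coeff q = 1" "poly (of_int_poly q) y = 0" using assms(2) unfolding algebraic_integer_def by blast
  define d where "d = degree p"
  define e where "e = degree q"
  have d: "d > 0" unfolding d_def by (rule monic_deg_pos[OF p])
  have e: "e > 0" unfolding e_def by (rule monic_deg_pos[OF q])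
  define I where "I = {..<d} \<times> {..<e}"
  define W where "W = (\<lambda>(i,j). x ^ i * y ^ j)"
  define S where "S = {s. \<exists>c :: nat \<times> nat \<Rightarrow> int. s = (\<Sum>j\<in>I. of_int (c j) * W j)}"
  have fin: "finite I" unfolding I_def by simp
  have S_I: "s \<in> S" if "s = (\<Sum>j\<in>I. of_int (c j) * W j)" for s c
    unfolding S_def using that by blast
  have S_W: "W k \<in> S" if "k \<in> I" for k
  proof -
    have "(\<Sum>j\<in>I. of_int (if j = k then 1 else 0) * W j) = (\<Sum>j\<in>I. if j = k then W j else 0)"
      by (rule sum.cong) auto
    also have "\<dots> = W k" using that fin by simp
    finally have "W k = (\<Sum>j\<in>I. of_int ((\<lambda>j. if j = k then 1 else 0) j) * W j)" by simp
    thus ?thesis by (rule S_I)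
  qed
  have S_add: "s + t \<in> S" if hs: "s \<in> S" "t \<in> S" for s t
  proof -
    obtain c c' where "s = (\<Sum>j\<in>I. of_int (c j) * W j)" "t = (\<Sum>j\<in>I. of_int (c' j) * W j)"
      using hs unfolding S_def by blast
    hence "s + t = (\<Sum>j\<in>I. of_int ((\<lambda>j. c j + c' j) j) * W j)" by (simp add: sum.distrib distrib_right)
    thus ?thesis by (rule S_I)
  qed
  have S_smult: "of_int k * s \<in> S" if hs: "s \<in> S" for s k
  proof -
    obtain c where "s = (\<Sum>j\<in>I. of_int (c j) * W j)" using hs unfolding S_def by blast
    hence "of_int k * s = (\<Sum>j\<in>I. of_int ((\<lambda>j. k * c j) j) * W j)" by (simp add: sum_distrib_left mult.assoc)
    thus ?thesis by (rule S_I)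
  qed
  have S_0: "0 \<in> S" unfolding S_def by (rule CollectI, rule exI[of _ "\<lambda>_. 0"]) simp
  have S_sum: "(\<forall>a\<in>A. f a \<in> S) \<longrightarrow> sum f A \<in> S" if "finite A" for A and f :: "nat \<Rightarrow> complex"
    using that by (induction A rule: finite_induct) (auto simp: S_0 S_add)
  have S_sum2: "(\<forall>a\<in>A. f a \<in> S) \<longrightarrow> sum f A \<in> S" if "finite A" for A and f :: "nat \<times> nat \<Rightarrow> complex"
    using that by (induction A rule: finite_induct) (auto simp: S_0 S_add)
  have S_mul: "z * s \<in> S" if hs: "\<And>k. k \<in> I \<Longrightarrow> z * W k \<in> S" "s \<in> S" for z s
  proof -
    obtain c where "s = (\<Sum>j\<in>I. of_int (c j) * W j)" using hs unfolding S_def by blast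
    hence "z * s = (\<Sum>j\<in>I. of_int (c j) * (z * W j))" by (simp add: sum_distrib_left algebra_simps)
    also have "\<dots> \<in> S"
    proof (rule S_sum2[OF fin, rule_format])
      fix j assume "j \<in> I" thus "of_int (c j) * (z * W j) \<in> S" using S_smult hs(1) by blast
    qed
    finally show ?thesis .
  qed
  have xd: "x ^ d = - (\<Sum>l<d. of_int (coeff p l) * x ^ l)" unfolding d_def by (rule monic_rel[OF p])
  have ye: "y ^ e = - (\<Sum>l<e. of_int (coeff q l) * y ^ l)" unfolding e_def by (rule monic_rel[OF q])
  have Sx: "x * W k \<in> S" if hk: "k \<in> I" for k
  proof -
    obtain i j where k: "k = (i,j)" "i < d" "j < e" using hk unfolding I_def by auto
    show ?thesis
    proof (cases "Suc i < d")
      case True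
      hence "x * W k = W (Suc i, j)" unfolding k W_def by simp
      thus ?thesis using S_W True k unfolding I_def by simp
    next
      case False
      hence sd: "Suc i = d" using k by simp
      have "x * W k = x ^ Suc i * y ^ j" unfolding k W_def by (simp add: mult.assoc)
      also have "\<dots> = x ^ d * y ^ j" using sd by simp
      also have "\<dots> = (\<Sum>l<d. of_int (- coeff p l) * W (l, j))" unfolding xd W_def
        by (simp add: sum_distrib_right sum_negf mult.assoc)
      also have "\<dots> \<in> S"
      proof -
        have "\<forall>l\<in>{..<d}. of_int (- coeff p l) * W (l, j) \<in> S"
        proof
          fix l assume "l \<in> {..<d}"
          hence "(l, j) \<in> I" using k unfolding I_def by simp
          thus "of_int (- coeff p l) * W (l, j) \<in> S" by (rule S_smult[OF S_W])
        qed
        thus ?thesis by (rule S_sum[OF finite_lessThan, THEN mp])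
      qed
      finally show ?thesis .
    qed
  qed
  have Sy: "y * W k \<in> S" if hk: "k \<in> I" for k
  proof -
    obtain i j where k: "k = (i,j)" "i < d" "j < e" using hk unfolding I_def by auto
    show ?thesis
    proof (cases "Suc j < e")
      case True
      hence "y * W k = W (i, Suc j)" unfolding k W_def by (simp add: algebra_simps)
      thus ?thesis using S_W True k unfolding I_def by simp
    next
      case False
      hence sd: "Suc j = e" using k by simp
      have "y * W k = x ^ i * y ^ Suc j" unfolding k W_def by (simp add: algebra_simps)
      also have "\<dots> = x ^ i * y ^ e" using sd by simp
      also have "\<dots> = (\<Sum>l<e. of_int (- coeff q l) * W (i, l))" unfolding ye W_def
        by (simp add: sum_distrib_left sum_negf algebra_simps)
      also have "\<dots> \<in> S"
      proof -
        have "\<forall>l\<in>{..<e}. of_int (- coeff q l) * W (i, l) \<in> S"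
        proof
          fix l assume "l \<in> {..<e}"
          hence "(i, l) \<in> I" using k unfolding I_def by simp
          thus "of_int (- coeff q l) * W (i, l) \<in> S" by (rule S_smult[OF S_W])
        qed
        thus ?thesis by (rule S_sum[OF finite_lessThan, THEN mp])
      qed
      finally show ?thesis .
    qed
  qed
  have w0: "(0,0) \<in> I" "W (0,0) \<noteq> 0" using d e unfolding I_def W_def by auto
  have "algebraic_integer (x + y)"
  proof (rule alg_int_span[where W = W, OF fin w0])
    fix k assume "k \<in> I"
    hence "(x + y) * W k \<in> S" using Sx Sy S_add by (simp add: distrib_right)
    thus "\<exists>c. (x + y) * W k = (\<Sum>j\<in>I. of_int (c j) * W j)" unfolding S_def by blast
  qed
  moreover have "algebraic_integer (x * y)"
  proof (rule alg_int_span[where W = W, OF fin w0])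
    fix k assume "k \<in> I"
    hence yk: "y * W k \<in> S" by (rule Sy)
    have "x * (y * W k) \<in> S" by (rule S_mul[OF Sx yk])
    thus "\<exists>c. (x * y) * W k = (\<Sum>j\<in>I. of_int (c j) * W j)" unfolding S_def by (simp add: mult.assoc)
  qed
  ultimately show ?thesis ..
qed



interpretation rat_cpx: map_poly_comm_ring_hom "of_rat :: rat \<Rightarrow> complex" ..

lemma alg_int_of_int: "algebraic_integer (of_int c :: complex)"
  unfolding algebraic_integer_def by (rule exI[of _ "[:-c, 1:]"]) simp

lemma alg_int_add: "algebraic_integer x \<Longrightarrow> algebraic_integer y \<Longrightarrow> algebraic_integer (x + y)"
  using alg_int_add_mult by blast
lemma alg_int_mult: "algebraic_integer x \<Longrightarrow> algebraic_integer y \<Longrightarrow> algebraic_integer (x * y)"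
  using alg_int_add_mult by blast

lemma nf_add: "x \<in> num_field g \<Longrightarrow> y \<in> num_field g \<Longrightarrow> x + y \<in> num_field g"
  unfolding num_field_def
proof safe
  fix p q :: "rat poly"
  show "\<exists>r. poly (map_poly of_rat p) g + poly (map_poly of_rat q) g = poly (map_poly of_rat r) g \<and> True"
    by (rule exI[of _ "p + q"]) (simp add: hom_distribs)
qed
lemma nf_mult: "x \<in> num_field g \<Longrightarrow> y \<in> num_field g \<Longrightarrow> x * y \<in> num_field g"
  unfolding num_field_def
proof safe
  fix p q :: "rat poly"
  show "\<exists>r. poly (map_poly of_rat p) g * poly (map_poly of_rat q) g = poly (map_poly of_rat r) g \<and> True"
    by (rule exI[of _ "p * q"]) (simp add: rat_cpx.hom_mult)
qed
lemma nf_of_int: "of_int c \<in> num_field g"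
  unfolding num_field_def by (rule CollectI, rule exI[of _ "[:of_int c:]"]) (simp add: of_rat_hom.map_poly_pCons_hom)
lemma nf_gen: "g \<in> num_field g"
  unfolding num_field_def by (rule CollectI, rule exI[of _ "[:0, 1:]"]) simp

lemma Ok_add: "x \<in> ring_of_integers g \<Longrightarrow> y \<in> ring_of_integers g \<Longrightarrow> x + y \<in> ring_of_integers g"
  unfolding ring_of_integers_def using nf_add alg_int_add by blast
lemma Ok_mult: "x \<in> ring_of_integers g \<Longrightarrow> y \<in> ring_of_integers g \<Longrightarrow> x * y \<in> ring_of_integers g"
  unfolding ring_of_integers_def using nf_mult alg_int_mult by blast
lemma Ok_of_int: "of_int c \<in> ring_of_integers g"
  unfolding ring_of_integers_def using nf_of_int alg_int_of_int by blast
lemma Ok_diff: "x \<in> ring_of_integers g \<Longrightarrow> y \<in> ring_of_integers g \<Longrightarrow> x - y \<in> ring_of_integers g"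
proof -
  assume "x \<in> ring_of_integers g" "y \<in> ring_of_integers g"
  hence "x + of_int (-1) * y \<in> ring_of_integers g" using Ok_add Ok_mult Ok_of_int by blast
  thus ?thesis by simp
qed
lemma Ok_gen: "algebraic_integer g \<Longrightarrow> g \<in> ring_of_integers g"
  unfolding ring_of_integers_def using nf_gen by blast

lemma Zg_Ok: "algebraic_integer g \<Longrightarrow> poly (of_int_poly P) g \<in> ring_of_integers g"
proof (induction P)
  case (pCons c P)
  have "poly (of_int_poly (pCons c P)) g = of_int c + g * poly (of_int_poly P) g" by (simp add: of_int_hom.map_poly_pCons_hom)
  thus ?case using pCons Ok_add Ok_mult Ok_of_int Ok_gen by metis
qed (simp add: Ok_of_int[of 0, simplified])

lemma Zg_I: "x = poly (of_int_poly P) g \<Longrightarrow> x \<in> int_order g"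
  unfolding int_order_def by blast
lemma Zg_E: "x \<in> int_order g \<Longrightarrow> \<exists>P. x = poly (of_int_poly P) g"
  unfolding int_order_def by blast
lemma Zg_add: "x \<in> int_order g \<Longrightarrow> y \<in> int_order g \<Longrightarrow> x + y \<in> int_order g"
  by (metis Zg_E Zg_I of_int_poly_hom.hom_add poly_add)
lemma Zg_diff: "x \<in> int_order g \<Longrightarrow> y \<in> int_order g \<Longrightarrow> x - y \<in> int_order g"
  by (metis Zg_E Zg_I of_int_poly_hom.hom_minus poly_diff)
lemma Zg_0: "0 \<in> int_order g"
  by (rule Zg_I[of _ 0]) simp
lemma Zg_uminus: "x \<in> int_order g \<Longrightarrow> - x \<in> int_order g"
  using Zg_diff[OF Zg_0] by fastforce
lemma Zg_sum: "finite A \<Longrightarrow> (\<And>a. a \<in> A \<Longrightarrow> f a \<in> int_order g) \<Longrightarrow> sum f A \<in> int_order g"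
  by (induction A rule: finite_induct) (auto simp: Zg_0 Zg_add)
lemma Zg_sub_Ok: "algebraic_integer g \<Longrightarrow> x \<in> int_order g \<Longrightarrow> x \<in> ring_of_integers g"
  using Zg_E Zg_Ok by blast



lemma coset_eq:
  assumes "x - x' \<in> int_order g"
  shows "{x + y | y. y \<in> int_order g} = {x' + y | y. y \<in> int_order g}"
proof (intro subset_antisym subsetI)
  fix w assume "w \<in> {x + y |y. y \<in> int_order g}"
  then obtain y where y: "w = x + y" "y \<in> int_order g" by blast
  hence "w = x' + ((x - x') + y)" "(x - x') + y \<in> int_order g" using assms Zg_add by auto
  thus "w \<in> {x' + y |y. y \<in> int_order g}" by blast
next
  fix w assume "w \<in> {x' + y |y. y \<in> int_order g}"
  then obtain y where y: "w = x' + y" "y \<in> int_order g" by blast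
  hence "w = x + (y - (x - x'))" "y - (x - x') \<in> int_order g" using assms Zg_diff by auto
  thus "w \<in> {x + y |y. y \<in> int_order g}" by blast
qed

lemma index_mult:
  assumes gi: "algebraic_integer g" and n: "order_index g > 0" and z: "z \<in> ring_of_integers g"
  shows "of_nat (order_index g) * z \<in> int_order g"
proof -
  define C where "C = (\<lambda>x. {x + y | y. y \<in> int_order g})"
  define CS where "CS = C ` ring_of_integers g"
  have nd: "order_index g = card CS" unfolding order_index_def CS_def C_def by simp
  have fin: "finite CS" using n nd card_ge_0_finite by auto
  have C_eq: "C x = C x'" if "x - x' \<in> int_order g" for x x'
    unfolding C_def using coset_eq[OF that] .
  have C_self: "x \<in> C x" for x unfolding C_def using Zg_0 by force
  have C_mem: "w - x \<in> int_order g" if "w \<in> C x" for w x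
    using that unfolding C_def by auto
  define r where "r = (\<lambda>S. SOME x. x \<in> ring_of_integers g \<and> S = C x)"
  have r: "r S \<in> ring_of_integers g \<and> S = C (r S)" if "S \<in> CS" for S
  proof -
    have "\<exists>x. x \<in> ring_of_integers g \<and> S = C x" using that unfolding CS_def by blast
    thus ?thesis unfolding r_def by (rule someI_ex)
  qed
  define T where "T = (\<lambda>S. C (r S + z))"
  have T_CS: "T S \<in> CS" if "S \<in> CS" for S
    unfolding T_def CS_def using r[OF that] z Ok_add by blast
  have inj: "inj_on T CS"
  proof (rule inj_onI)
    fix S1 S2 assume S: "S1 \<in> CS" "S2 \<in> CS" "T S1 = T S2"
    have "r S1 + z \<in> C (r S2 + z)" using C_self[of "r S1 + z"] S(3) unfolding T_def by simp
    hence "(r S1 + z) - (r S2 + z) \<in> int_order g" by (rule C_mem)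
    hence "r S1 - r S2 \<in> int_order g" by simp
    hence "C (r S1) = C (r S2)" by (rule C_eq)
    thus "S1 = S2" using r[OF S(1)] r[OF S(2)] by simp
  qed
  have TCS: "T ` CS = CS"
  proof (rule card_subset_eq[OF fin])
    show "T ` CS \<subseteq> CS" using T_CS by blast
    show "card (T ` CS) = card CS" by (rule card_image[OF inj])
  qed
  have s1: "(\<Sum>S\<in>CS. r (T S)) = (\<Sum>S\<in>CS. r S)"
    using sum.reindex[OF inj, of r] TCS by simp
  define y where "y = (\<lambda>S. r (T S) - r S - z)"
  have y: "y S \<in> int_order g" if "S \<in> CS" for S
  proof -
    have "r (T S) \<in> C (r (T S))" by (rule C_self)
    also have "C (r (T S)) = T S" using r[OF T_CS[OF that]] by simp
    finally have "r (T S) \<in> C (r S + z)" unfolding T_def .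
    from C_mem[OF this] show ?thesis unfolding y_def by (simp add: algebra_simps)
  qed
  have "(\<Sum>S\<in>CS. y S) = (\<Sum>S\<in>CS. r (T S)) - (\<Sum>S\<in>CS. r S) - of_nat (card CS) * z"
    unfolding y_def by (simp add: sum_subtractf)
  also have "\<dots> = - (of_nat (order_index g) * z)" using s1 nd by simp
  finally have "of_nat (order_index g) * z = - (\<Sum>S\<in>CS. y S)" by simp
  also have "\<dots> \<in> int_order g" using Zg_uminus Zg_sum[OF fin] y by blast
  finally show ?thesis .
qed



lemma ev_rat_int: "poly (map_poly (of_rat :: rat \<Rightarrow> complex) (map_poly rat_of_int p)) x = poly (of_int_poly p) x"
  by (simp add: map_poly_map_poly o_def)

lemma minpoly_dvd:
  fixes f P :: "int poly" and \<gamma> :: complex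
  assumes mon: "lead_coeff f = 1" and irr: "irreducible (map_poly rat_of_int f)"
    and root: "poly (of_int_poly f) \<gamma> = 0" and P: "poly (of_int_poly P) \<gamma> = 0"
  shows "f dvd P"
proof -
  obtain Q R where pd: "pseudo_divmod P f = (Q, R)" by (metis surj_pair)
  have f0: "f \<noteq> 0" using mon by auto
  have PQ: "P = f * Q + R" using pseudo_divmod(1)[OF f0 pd] mon by simp
  have Rd: "R = 0 \<or> degree R < degree f" using pseudo_divmod(2)[OF f0 pd] .
  have evR: "poly (of_int_poly R) \<gamma> = 0"
  proof -
    have "poly (of_int_poly P) \<gamma> = poly (of_int_poly f) \<gamma> * poly (of_int_poly Q) \<gamma> + poly (of_int_poly R) \<gamma>"
      unfolding PQ by (simp add: of_int_poly_hom.hom_add of_int_poly_hom.hom_mult)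
    thus ?thesis using P root by simp
  qed
  have "R = 0"
  proof (rule ccontr)
    assume R0: "R \<noteq> 0"
    hence dR: "degree R < degree f" using Rd by simp
    define fq where "fq = map_poly rat_of_int f"
    define Rq where "Rq = map_poly rat_of_int R"
    define E where "E = (\<lambda>p. poly (map_poly (of_rat :: rat \<Rightarrow> complex) p) \<gamma>)"
    have Ef: "E fq = 0" unfolding E_def fq_def ev_rat_int using root .
    have ER: "E Rq = 0" unfolding E_def Rq_def ev_rat_int using evR .
    define D where "D = gcd fq Rq"
    have "D = fst (bezout_coefficients fq Rq) * fq + snd (bezout_coefficients fq Rq) * Rq"
      unfolding D_def by (simp add: bezout_coefficients_fst_snd)
    hence ED: "E D = 0" unfolding E_def using Ef ER unfolding E_def by (simp add: rat_cpx.hom_add rat_cpx.hom_mult)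
    have "D dvd fq" unfolding D_def by simp
    hence "fq dvd D \<or> is_unit D" using irreducibleD'[OF irr[folded fq_def]] by blast
    moreover have "\<not> is_unit D"
    proof
      assume "is_unit D"
      hence "D \<noteq> 0" "degree D = 0" using is_unit_field_poly by auto
      then obtain c where "D = [:c:]" "c \<noteq> 0" by (metis degree_0_id pCons_eq_0_iff)
      hence "E D = of_rat c" unfolding E_def by (simp add: of_rat_hom.map_poly_pCons_hom)
      thus False using ED \<open>c \<noteq> 0\<close> by simp
    qed
    ultimately have "fq dvd D" by blast
    moreover have "D dvd Rq" unfolding D_def by simp
    ultimately have "fq dvd Rq" by (rule dvd_trans)
    moreover have "Rq \<noteq> 0" unfolding Rq_def using R0 by simp
    ultimately have "degree fq \<le> degree Rq" by (rule dvd_imp_degree_le)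
    thus False unfolding fq_def Rq_def using dR by (simp add: of_int_hom.degree_map_poly_hom)
  qed
  thus ?thesis using PQ by simp
qed



lemma lift_exists:
  fixes a :: int and g :: "rat poly"
  assumes g_denoms: "\<forall>i. coprime (snd (quotient_of (coeff g i))) a"
  shows "\<exists>G. reduction_lift a g G"
proof -
  define s where "s = (\<lambda>i. snd (quotient_of (coeff g i)))"
  define r where "r = (\<lambda>i. fst (quotient_of (coeff g i)))"
  define iv where "iv = (\<lambda>i. SOME u. [s i * u = 1] (mod a))"
  have iv: "[s i * iv i = 1] (mod a)" for i
  proof -
    have "coprime (s i) a" using g_denoms s_def by simp
    hence "\<exists>u. [s i * u = 1] (mod a)" by (rule cong_solve_coprime_int)
    thus ?thesis unfolding iv_def by (rule someI_ex)
  qed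
  define G where "G = Poly (map (\<lambda>i. r i * iv i) [0..<Suc (degree g)])"
  have "[coeff G i * s i = r i] (mod a)" for i
  proof (cases "i \<le> degree g")
    case True
    hence "coeff G i = r i * iv i" unfolding G_def by (simp add: nth_default_def del: upt_Suc)
    hence "coeff G i * s i = r i * (s i * iv i)" by simp
    moreover have "[r i * (s i * iv i) = r i * 1] (mod a)" by (rule cong_mult[OF cong_refl iv])
    ultimately show ?thesis by (metis mult_1_right)
  next
    case False
    hence "coeff G i = 0" unfolding G_def by (simp add: nth_default_def)
    moreover have "coeff g i = 0" using False by (simp add: coeff_eq_0)
    ultimately show ?thesis unfolding r_def s_def by simp
  qed
  thus ?thesis unfolding reduction_lift_def r_def s_def by blast
qed

lemma beta_lemma:
  fixes a :: int and g :: "rat poly" and G :: "int poly" and \<gamma> \<alpha> :: complex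
  assumes gi: "algebraic_integer \<gamma>" and a: "a > 0" and alpha: "\<alpha> \<in> ring_of_integers \<gamma>"
    and g_alpha: "poly (map_poly of_rat g) \<gamma> = \<alpha>"
    and g_denoms: "\<forall>i. coprime (snd (quotient_of (coeff g i))) a"
    and lift: "reduction_lift a g G"
  shows "\<exists>\<beta> \<in> ring_of_integers \<gamma>. poly (of_int_poly G) \<gamma> = \<alpha> + of_int a * \<beta>"
proof -
  define s where "s = (\<lambda>i. snd (quotient_of (coeff g i)))"
  define r where "r = (\<lambda>i. fst (quotient_of (coeff g i)))"
  have qs: "quotient_of (coeff g i) = (r i, s i)" for i unfolding r_def s_def by simp
  have gi_eq: "coeff g i = of_int (r i) / of_int (s i)" for i by (rule quotient_of_div[OF qs[of i]])
  have spos: "s i > 0" for i by (rule quotient_of_denom_pos[OF qs[of i]])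
  have cg: "[coeff G i * s i = r i] (mod a)" for i using lift unfolding reduction_lift_def r_def s_def by blast
  define t where "t = (\<lambda>i. (coeff G i * s i - r i) div a)"
  have t: "a * t i = coeff G i * s i - r i" for i
    using cg[of i] unfolding t_def cong_iff_dvd_diff by (metis cong_iff_dvd_diff dvd_mult_div_cancel cg)
  define N where "N = degree g"
  define S where "S = (\<Prod>i\<le>N. s i)"
  have cop: "coprime S a" unfolding S_def by (rule prod_coprime_left) (use g_denoms s_def in simp)
  have sdvd: "s i dvd S" for i
  proof (cases "i \<le> N")
    case True thus ?thesis unfolding S_def by (intro dvd_prodI) auto
  next
    case False
    hence "coeff g i = 0" unfolding N_def by (simp add: coeff_eq_0)
    hence "s i = 1" unfolding s_def by simp
    thus ?thesis by simp
  qed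
  define D where "D = (map_poly of_int G :: rat poly) - g"
  have cD: "coeff D i = of_int (a * t i) / of_int (s i)" for i
  proof -
    have "coeff D i = of_int (coeff G i) - of_int (r i) / of_int (s i)" by (simp add: D_def gi_eq)
    also have "\<dots> = of_int (coeff G i * s i - r i) / of_int (s i)" using spos[of i] by (simp add: field_simps)
    finally show ?thesis using t by simp
  qed
  define H where "H = map_poly (\<lambda>q. floor q) (Polynomial.smult (of_int S / of_int a) D)"
  have cH: "coeff (Polynomial.smult (of_int S / of_int a) D) i = of_int ((S div s i) * t i)" for i
  proof -
    have Ss: "of_int S = (of_int (S div s i) * of_int (s i) :: rat)" using sdvd[of i] by (metis dvd_mult_div_cancel mult.commute of_int_mult)
    show ?thesis unfolding coeff_smult cD using spos[of i] a by (simp add: Ss field_simps)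
  qed
  have HD: "map_poly of_int H = Polynomial.smult (of_int S / of_int a) D"
  proof (rule poly_eqI)
    fix i
    have c1: "coeff H i = (S div s i) * t i" unfolding H_def
      by (subst coeff_map_poly) (simp_all only: cH floor_of_int floor_zero)
    hence "coeff (map_poly of_int H) i = (of_int ((S div s i) * t i) :: rat)" by (simp add: coeff_map_poly)
    also have "\<dots> = coeff (Polynomial.smult (of_int S / of_int a) D) i" by (rule cH[symmetric])
    finally show "coeff (map_poly of_int H) i = coeff (Polynomial.smult (of_int S / of_int a) D) i" .
  qed
  define \<beta> where "\<beta> = (poly (of_int_poly G) \<gamma> - \<alpha>) / of_int a"
  have evD: "poly (map_poly (of_rat :: rat \<Rightarrow> complex) D) \<gamma> = poly (of_int_poly G) \<gamma> - \<alpha>"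
    unfolding D_def g_alpha[symmetric] by (simp add: rat_cpx.hom_minus ev_rat_int)
  have Sb: "of_int S * \<beta> \<in> int_order \<gamma>"
  proof -
    have "poly (of_int_poly H) \<gamma> = poly (map_poly (of_rat :: rat \<Rightarrow> complex) (map_poly of_int H)) \<gamma>"
      by (simp add: ev_rat_int)
    also have "\<dots> = of_int S / of_int a * (poly (of_int_poly G) \<gamma> - \<alpha>)"
      unfolding HD by (simp add: of_rat_hom.map_poly_hom_smult evD of_rat_divide)
    also have "\<dots> = of_int S * \<beta>" unfolding \<beta>_def by simp
    finally show ?thesis by (metis Zg_I)
  qed
  have ab: "of_int a * \<beta> = poly (of_int_poly G) \<gamma> - \<alpha>" unfolding \<beta>_def using a by simp
  have ab_Ok: "of_int a * \<beta> \<in> ring_of_integers \<gamma>" unfolding ab by (rule Ok_diff[OF Zg_Ok[OF gi] alpha])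
  obtain p q where pq: "p * S + q * a = 1"
    using bezout_coefficients_fst_snd[of S a] cop by (metis coprime_imp_gcd_eq_1)
  have "\<beta> = of_int p * (of_int S * \<beta>) + of_int q * (of_int a * \<beta>)"
  proof -
    have "of_int p * (of_int S * \<beta>) + of_int q * (of_int a * \<beta>) = (of_int (p * S + q * a) :: complex) * \<beta>"
      by (simp add: algebra_simps)
    thus ?thesis using pq by simp
  qed
  hence "\<beta> \<in> ring_of_integers \<gamma>"
    using Ok_add Ok_mult Ok_of_int Zg_sub_Ok[OF gi Sb] ab_Ok by metis
  thus ?thesis using ab by (intro bexI[of _ \<beta>]) simp_all
qed



lemma int_ideal_gen:
  fixes J :: "int set" and a :: int
  assumes a: "a > 0" "a \<in> J"
    and diff: "\<And>c d. c \<in> J \<Longrightarrow> d \<in> J \<Longrightarrow> c - d \<in> J"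
    and mult: "\<And>c k. c \<in> J \<Longrightarrow> k * c \<in> J"
  shows "\<exists>m>0. m dvd a \<and> J = {k * m | k. True}"
proof -
  define P where "P = (\<lambda>k::nat. k > 0 \<and> int k \<in> J)"
  have Pa: "P (nat a)" unfolding P_def using a by simp
  define m0 where "m0 = (LEAST k. P k)"
  have Pm: "P m0" unfolding m0_def by (rule LeastI[of P, OF Pa])
  have minm: "\<not> P k" if "k < m0" for k using not_less_Least[OF that[unfolded m0_def]] unfolding m0_def .
  define m where "m = int m0"
  have m: "m > 0" "m \<in> J" using Pm unfolding P_def m_def by auto
  have J_eq: "J = {k * m | k. True}"
  proof (intro subset_antisym subsetI)
    fix c assume c: "c \<in> J"
    have "c - (c div m) * m \<in> J" using diff[OF c mult[OF m(2)]] .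
    hence cm: "c mod m \<in> J" by (metis minus_div_mult_eq_mod)
    have "c mod m = 0"
    proof (rule ccontr)
      assume "c mod m \<noteq> 0"
      hence pos: "c mod m > 0" using m(1) by (metis pos_mod_sign order_le_less)
      have "c mod m < m" using m(1) by simp
      hence "nat (c mod m) < m0" using pos unfolding m_def by linarith
      moreover have "P (nat (c mod m))" unfolding P_def using pos cm by simp
      ultimately show False using minm by blast
    qed
    hence "c = (c div m) * m" by (metis minus_div_mult_eq_mod diff_zero eq_iff_diff_eq_0)
    thus "c \<in> {k * m | k. True}" by blast
  next
    fix c assume "c \<in> {k * m | k. True}"
    then obtain k where "c = k * m" by blast
    thus "c \<in> J" using mult[OF m(2)] by simp
  qed
  have "m dvd a"
  proof -
    have "a \<in> {k * m | k. True}" using a J_eq by blast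
    thus ?thesis by auto
  qed
  thus ?thesis using m J_eq by blast
qed

lemma gen_unique:
  fixes m m' :: int
  assumes "m > 0" "m' > 0" "{k * m | k. True} = {k * m' | k. True}"
  shows "m = m'"
proof -
  have "m \<in> {k * m' | k. True}" using assms(3) by (metis (mono_tags, lifting) mem_Collect_eq mult_1)
  hence d1: "m' dvd m" by auto
  have "m' \<in> {k * m | k. True}" using assms(3) by (metis (mono_tags, lifting) mem_Collect_eq mult_1)
  hence d2: "m dvd m'" by auto
  show ?thesis using d1 d2 assms(1,2) by (simp add: zdvd_antisym_nonneg)
qed



lemma gen_ideal_mod_eq:
  fixes a m :: int
  assumes "m > 0" "m dvd a"
  shows "gen_ideal_mod a m = {k * m | k. True}"
proof (intro subset_antisym subsetI)
  fix c assume "c \<in> gen_ideal_mod a m"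
  then obtain k where "[c = k * m] (mod a)" unfolding gen_ideal_mod_def by blast
  hence "a dvd c - k * m" by (simp add: cong_iff_dvd_diff)
  then obtain t where "c - k * m = a * t" by blast
  moreover obtain a' where "a = m * a'" using assms(2) by blast
  ultimately have "c = (k + a' * t) * m" by (simp add: algebra_simps)
  thus "c \<in> {k * m | k. True}" by blast
next
  fix c assume "c \<in> {k * m | k. True}"
  then obtain k where "c = k * m" by blast
  thus "c \<in> gen_ideal_mod a m" unfolding gen_ideal_mod_def by (blast intro: cong_refl)
qed

theorem lemma8p3:
  fixes \<gamma> \<alpha> :: complex and f :: "int poly" and g :: "rat poly" and a :: int
  assumes gamma_int: "algebraic_integer \<gamma>"
    and f_monic: "lead_coeff f = 1"
    and f_irred: "irreducible (map_poly rat_of_int f)"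
    and f_root: "poly (map_poly of_int f) \<gamma> = 0"
    and a_pos: "a > 0"
    and alpha_int: "\<alpha> \<in> ring_of_integers \<gamma>"
    and coprime_index: "coprime a (int (order_index \<gamma>))"
    and g_alpha: "poly (map_poly of_rat g) \<gamma> = \<alpha>"
    and g_denoms: "\<forall>i. coprime (snd (quotient_of (coeff g i))) a"
  shows "ideal_min (two_gen_ideal \<gamma> a \<alpha>) > 0
      \<and> ideal_min (two_gen_ideal \<gamma> a \<alpha>) dvd a
      \<and> rres_mod a g f = gen_ideal_mod a (ideal_min (two_gen_ideal \<gamma> a \<alpha>))
      \<and> (\<forall>m. m > 0 \<and> m dvd a \<and> rres_mod a g f = gen_ideal_mod a m
              \<longrightarrow> m = ideal_min (two_gen_ideal \<gamma> a \<alpha>))"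
proof -
  define I where "I = two_gen_ideal \<gamma> a \<alpha>"
  define J where "J = {c :: int. of_int c \<in> I}"
  define R where "R = rres_mod a g f"
  define ev where "ev = (\<lambda>P :: int poly. poly (of_int_poly P) \<gamma>)"
  have ev_Ok: "ev P \<in> ring_of_integers \<gamma>" for P unfolding ev_def by (rule Zg_Ok[OF gamma_int])
  have J_I: "c \<in> J" if "of_int c = of_int a * x + \<alpha> * y" "x \<in> ring_of_integers \<gamma>" "y \<in> ring_of_integers \<gamma>" for c x y
    unfolding J_def I_def two_gen_ideal_def using that by blast
  have J_E: "\<exists>x y. x \<in> ring_of_integers \<gamma> \<and> y \<in> ring_of_integers \<gamma> \<and> of_int c = of_int a * x + \<alpha> * y" if "c \<in> J" for c
    using that unfolding J_def I_def two_gen_ideal_def by auto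
  obtain G where lift: "reduction_lift a g G" using lift_exists[OF g_denoms] by blast
  have RJ: "R \<subseteq> J"
  proof
    fix c assume "c \<in> R"
    then obtain G u v where liftG: "reduction_lift a g G"
      and cg: "\<forall>i. [coeff (u * G + v * f) i = coeff [:c:] i] (mod a)"
      unfolding R_def rres_mod_def by blast
    define Dp where "Dp = u * G + v * f - [:c:]"
    have dv: "a dvd coeff Dp i" for i
      using cg unfolding Dp_def by (simp add: cong_iff_dvd_diff)
    define w where "w = map_poly (\<lambda>z. z div a) Dp"
    have Dw: "Dp = Polynomial.smult a w"
    proof (rule poly_eqI)
      fix i show "coeff Dp i = coeff (Polynomial.smult a w) i"
        unfolding w_def using dv[of i] by (simp add: coeff_map_poly)
    qed
    have "ev Dp = ev u * ev G + ev v * ev f - of_int c"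
      unfolding ev_def Dp_def by (simp add: of_int_poly_hom.hom_add of_int_poly_hom.hom_mult of_int_poly_hom.hom_minus of_int_hom.map_poly_pCons_hom)
    moreover have "ev Dp = of_int a * ev w"
      unfolding Dw ev_def by (simp add: of_int_hom.map_poly_hom_smult)
    moreover have "ev f = 0" using f_root unfolding ev_def .
    ultimately have c1: "of_int c = ev u * ev G - of_int a * ev w" by (simp add: algebra_simps)
    obtain \<beta> where b: "\<beta> \<in> ring_of_integers \<gamma>" "ev G = \<alpha> + of_int a * \<beta>"
      using beta_lemma[OF gamma_int a_pos alpha_int g_alpha g_denoms liftG] unfolding ev_def by blast
    have "of_int c = of_int a * (ev u * \<beta> - ev w) + \<alpha> * ev u"
      unfolding c1 b(2) by (simp add: algebra_simps)
    moreover have "ev u * \<beta> - ev w \<in> ring_of_integers \<gamma>" using Ok_diff Ok_mult ev_Ok b(1) by blast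
    ultimately show "c \<in> J" using J_I ev_Ok by blast
  qed
  obtain \<beta> where b: "\<beta> \<in> ring_of_integers \<gamma>" "ev G = \<alpha> + of_int a * \<beta>"
    using beta_lemma[OF gamma_int a_pos alpha_int g_alpha g_denoms lift] unfolding ev_def by blast
  have JR: "J \<subseteq> R"
  proof
    fix c assume "c \<in> J"
    then obtain x y where xy: "x \<in> ring_of_integers \<gamma>" "y \<in> ring_of_integers \<gamma>"
      and cxy: "of_int c = of_int a * x + \<alpha> * y" using J_E by blast
    define n where "n = order_index \<gamma>"
    show "c \<in> R"
    proof (cases "n = 0")
      case True
      hence "is_unit a" using coprime_index unfolding n_def by simp
      hence a1: "a = 1" using a_pos zdvd1_eq[of a] by auto
      show ?thesis unfolding R_def rres_mod_def
        by (rule CollectI, rule exI[of _ G], rule exI[of _ 0], rule exI[of _ 0]) (simp add: a1 lift[unfolded a1])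
    next
      case False
      hence npos: "order_index \<gamma> > 0" unfolding n_def by simp
      define N where "N = int n"
      obtain X where nx: "of_nat n * x = ev X"
        using Zg_E[OF index_mult[OF gamma_int npos xy(1)]] unfolding ev_def n_def by blast
      obtain Y where ny: "of_nat n * y = ev Y"
        using Zg_E[OF index_mult[OF gamma_int npos xy(2)]] unfolding ev_def n_def by blast
      obtain B where nb: "of_nat n * \<beta> = ev B"
        using Zg_E[OF index_mult[OF gamma_int npos b(1)]] unfolding ev_def n_def by blast
      define P where "P = [:N^2 * c:] - (Polynomial.smult (a * N) X + Polynomial.smult N (G * Y) - Polynomial.smult a (B * Y))"
      have evP: "ev P = of_int (N^2 * c) - (of_int (a * N) * ev X + of_int N * (ev G * ev Y) - of_int a * (ev B * ev Y))"
        unfolding ev_def P_def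
        by (simp add: of_int_poly_hom.hom_add of_int_poly_hom.hom_mult of_int_poly_hom.hom_minus of_int_hom.map_poly_pCons_hom of_int_hom.map_poly_hom_smult)
      have "ev P = 0"
      proof -
        have "of_int (N^2 * c) = (of_int (a * N) * ev X + of_int N * (ev G * ev Y) - of_int a * (ev B * ev Y) :: complex)"
          unfolding nx[symmetric] ny[symmetric] nb[symmetric] b(2) N_def
          by (simp add: cxy algebra_simps power2_eq_square)
        thus ?thesis using evP by simp
      qed
      hence "f dvd P" using minpoly_dvd[OF f_monic f_irred f_root] unfolding ev_def by blast
      then obtain W where PW: "P = f * W" by blast
      have cop: "coprime N a" using coprime_index unfolding N_def n_def by (simp add: coprime_commute)
      obtain n' where n': "[N * n' = 1] (mod a)" using cong_solve_coprime_int[OF cop] by blast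
      define E where "E = Polynomial.smult N X - B * Y"
      define u where "u = Polynomial.smult (n'^2 * N) Y"
      define v where "v = Polynomial.smult (n'^2) W"
      have fW: "f * W = [:N^2 * c:] - (Polynomial.smult (a * N) X + Polynomial.smult N (G * Y) - Polynomial.smult a (B * Y))"
        using PW P_def by simp
      have uv: "u * G + v * f = Polynomial.smult (n'^2) ([:N^2 * c:] - Polynomial.smult a E)"
      proof -
        have "u * G + v * f = Polynomial.smult (n'^2) (Polynomial.smult N (G * Y) + f * W)"
          unfolding u_def v_def by (simp add: algebra_simps smult_add_right)
        also have "\<dots> = Polynomial.smult (n'^2) ([:N^2 * c:] - Polynomial.smult a E)"
          unfolding fW E_def by (simp add: algebra_simps smult_add_right smult_diff_right)
        finally show ?thesis .
      qed
      have "[coeff (u * G + v * f) i = coeff [:c:] i] (mod a)" for i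
      proof -
        have key: "[n'^2 * (N^2 * z - a * e) = 1^2 * z] (mod a)" for z e
        proof -
          have "[(N * n')^2 * z - a * (n'^2 * e) = 1^2 * z - 0] (mod a)"
            by (intro cong_diff cong_mult cong_pow n' cong_refl) (simp add: cong_def)
          thus ?thesis by (simp add: algebra_simps power_mult_distrib)
        qed
        show ?thesis
        proof (cases "i = 0")
          case True
          thus ?thesis unfolding uv using key[of c "coeff E 0"] by simp
        next
          case False
          hence "coeff (u * G + v * f) i = n'^2 * (N^2 * 0 - a * coeff E i)" unfolding uv by (simp add: coeff_pCons split: nat.splits)
          moreover have "coeff [:c:] i = 1^2 * 0" using False by (simp add: coeff_pCons split: nat.splits)
          ultimately show ?thesis using key[of 0 "coeff E i"] by simp
        qed
      qed
      thus "c \<in> R" unfolding R_def rres_mod_def using lift by blast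
    qed
  qed
  have JReq: "J = R" using RJ JR by blast
  have J_a: "a \<in> J" by (rule J_I[of _ 1 0]) (simp_all add: Ok_of_int[of 1, simplified] Ok_of_int[of 0, simplified])
  have J_diff: "c - d \<in> J" if hc: "c \<in> J" "d \<in> J" for c d
  proof -
    obtain x y where "x \<in> ring_of_integers \<gamma>" "y \<in> ring_of_integers \<gamma>" "of_int c = of_int a * x + \<alpha> * y"
      using J_E[OF hc(1)] by blast
    moreover obtain x' y' where "x' \<in> ring_of_integers \<gamma>" "y' \<in> ring_of_integers \<gamma>" "of_int d = of_int a * x' + \<alpha> * y'"
      using J_E[OF hc(2)] by blast
    ultimately show ?thesis using J_I[of "c - d" "x - x'" "y - y'"] Ok_diff by (simp add: algebra_simps)
  qed
  have J_mult: "k * c \<in> J" if hc: "c \<in> J" for c k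
  proof -
    obtain x y where "x \<in> ring_of_integers \<gamma>" "y \<in> ring_of_integers \<gamma>" "of_int c = of_int a * x + \<alpha> * y"
      using J_E[OF hc] by blast
    thus ?thesis using J_I[of "k * c" "of_int k * x" "of_int k * y"] Ok_mult Ok_of_int by (simp add: algebra_simps)
  qed
  obtain m where m: "m > 0" "m dvd a" "J = {k * m | k. True}"
    using int_ideal_gen[OF a_pos J_a J_diff J_mult] by blast
  have im: "ideal_min I = m"
    unfolding ideal_min_def
  proof (rule the_equality)
    show "m > 0 \<and> {n. of_int n \<in> I} = {k * m | k. True}" using m unfolding J_def by simp
  next
    fix m' assume "m' > 0 \<and> {n. of_int n \<in> I} = {k * m' | k. True}"
    thus "m' = m" using gen_unique[OF m(1)] m(3) unfolding J_def by metis
  qed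
  have RG: "R = gen_ideal_mod a m" using JReq m gen_ideal_mod_eq by simp
  show ?thesis unfolding I_def[symmetric] R_def[symmetric] im
  proof (intro conjI allI impI)
    show "m > 0" "m dvd a" "R = gen_ideal_mod a m" using m RG by auto
  next
    fix m' assume h: "m' > 0 \<and> m' dvd a \<and> R = gen_ideal_mod a m'"
    hence "{k * m' | k. True} = {k * m | k. True}" using gen_ideal_mod_eq RG m by metis
    thus "m' = m" using gen_unique h m(1) by metis
  qed
qed

end
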